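(* Let $D\subseteq\mathbb{R}^{p+2}$ be an open set invariant under $(\mathbf{x}_p,r)\mapsto(\mathbf{x}_p,-r)$ and let $f(\mathbf{x})=F_1(\mathbf{x}')+\underline{\omega}F_2(\mathbf{x}')$ be a generalized partial-slice function on $\Omega_D$ induced by a $C^2$ stem function $(F_1,F_2)$, with $f\in C^2(\Omega_D,\mathbb{A})$. Then for all $\mathbf{x}=\mathbf{x}_p+r\underline{\omega}\in\Omega_D$, $$\Delta_{\mathbf{x}}f(\mathbf{x})=\Delta_{\mathbf{x}'}F_1(\mathbf{x}')+\underline{\omega}\Delta_{\mathbf{x}'}F_2(\mathbf{x}')+(q-1)\Big(\big(\tfrac1r\partial_r\big)F_1(\mathbf{x}')+\underline{\omega}\big(\partial_r\tfrac1r\big)F_2(\mathbf{x}')\Big),$$ where $\Delta_{\mathbf{x}'}=\Delta_{\mathbf{x}_p}+\partial_r^2$, and at points $\mathbf{x}'=(\mathbf{x}_p,0)\in D$ the values of $(\frac1r\partial_r)F_1$ and $(\partial_r\frac1r)F_2$ are meant as $\lim_{r\to0}(\frac1r\partial_r)F_1(\mathbf{x}')=\partial_r^2F_1(\mathbf{x}_p,0)$ and $\lim_{r\to0}(\partial_r\frac1r)F_2(\mathbf{x}')=\frac12\partial_r^2F_2(\mathbf{x}_p,0)$.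
   Context: Let $\mathbb{A}$ be a real alternative algebra (the associator $[a,b,c]=(ab)c-a(bc)$ is an alternating trilinear function) with unity $1$, of finite real dimension $d>1$, equipped with an anti-involution $a\mapsto a^c$ (real linear, $a^c=a$ for real $a$, $(a^c)^c=a$, $(ab)^c=b^ca^c$). Let $t(x)=x+x^c$, $n(x)=xx^c$, $\mathbb{S}_{\mathbb{A}}=\{x: t(x)=0,\ n(x)=1\}$ (assumed nonempty) and $Q_{\mathbb{A}}=\mathbb{R}\cup\{x: t(x)\in\mathbb{R},\ n(x)\in\mathbb{R},\ 4n(x)>t(x)^2\}$. Let $M$ be a real subspace with $\mathbb{R}\subsetneq M\subseteq Q_{\mathbb{A}}$ having a basis $(v_0,\dots,v_m)$, $m\ge1$, $v_0=1$, $v_s\in\mathbb{S}_{\mathbb{A}}$, $v_sv_t=-v_tv_s$ for distinct $s,t\ge1$; complete it to a basis of $\mathbb{A}$ with associated Euclidean norm. Identify $x=\sum x_sv_s\in M$ with $(x_0,\dots,x_m)\in\mathbb{R}^{m+1}$; differentiate componentwise. Fix $p\in\{0,\dots,m-1\}$, $q=m-p$; $\mathbf{x}=\mathbf{x}_p+\underline{\mathbf{x}}_q$ with $\mathbf{x}_p=\sum_{s=0}^px_sv_s\in\mathbb{R}^{p+1}$, $\underline{\mathbf{x}}_q=\sum_{s=p+1}^m x_sv_s$; $\mathbb{S}=\{\sum_{s=p+1}^m x_sv_s:\sum x_s^2=1\}$; $\underline{\mathbf{x}}_q=r\underline{\omega}$, $r=|\underline{\mathbf{x}}_q|$, $\underline{\omega}\in\mathbb{S}$;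 $\mathbf{x}'=(\mathbf{x}_p,r)$. $\Delta_{\mathbf{x}_p}=\sum_{s=0}^p\partial_{x_s}^2$, $\Delta_{\mathbf{x}}=\sum_{s=0}^m\partial_{x_s}^2$; $(\partial_r\frac1r)G$ means $\partial_r(G/r)$. For open $D$ invariant under the reflection, $\Omega_D=\{\mathbf{x}_p+r\underline{\omega}:(\mathbf{x}_p,r)\in D,\ r\ge0,\ \underline{\omega}\in\mathbb{S}\}$; a stem function $(F_1,F_2):D\to\mathbb{A}^2$ has $F_1$ even and $F_2$ odd in $r$ and induces $f(\mathbf{x}_p+r\underline{\omega})=F_1(\mathbf{x}')+\underline{\omega}F_2(\mathbf{x}')$. *)

theory Defs
  imports "HOL-Analysis.Analysis"
begin

text \<open>Real numbers c are identified with c *R one.\<close>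

definition associator :: "('a::real_vector \<Rightarrow> 'a \<Rightarrow> 'a) \<Rightarrow> 'a \<Rightarrow> 'a \<Rightarrow> 'a \<Rightarrow> 'a" where
  "associator mul a b c = mul (mul a b) c - mul a (mul b c)"

definition alt_algebra_invol ::
  "('a::real_vector \<Rightarrow> 'a \<Rightarrow> 'a) \<Rightarrow> 'a \<Rightarrow> ('a \<Rightarrow> 'a) \<Rightarrow> bool" where
  "alt_algebra_invol mul one cj \<longleftrightarrow>
     bilinear mul \<and>
     (\<forall>a. mul one a = a \<and> mul a one = a) \<and>
     (\<forall>a b. associator mul a a b = 0 \<and> associator mul a b a = 0 \<and> associator mul b a a = 0) \<and>
     linear cj \<and>
     (\<forall>c. cj (c *\<^sub>R one) = c *\<^sub>R one) \<and>
     (\<forall>a. cj (cj a) = a) \<and>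
     (\<forall>a b. cj (mul a b) = mul (cj b) (cj a))"

definition alg_t :: "('a::real_vector \<Rightarrow> 'a) \<Rightarrow> 'a \<Rightarrow> 'a" where
  "alg_t cj x = x + cj x"

definition alg_n :: "('a::real_vector \<Rightarrow> 'a \<Rightarrow> 'a) \<Rightarrow> ('a \<Rightarrow> 'a) \<Rightarrow> 'a \<Rightarrow> 'a" where
  "alg_n mul cj x = mul x (cj x)"

definition sphere_A :: "('a::real_vector \<Rightarrow> 'a \<Rightarrow> 'a) \<Rightarrow> 'a \<Rightarrow> ('a \<Rightarrow> 'a) \<Rightarrow> 'a set" where
  "sphere_A mul one cj = {x. alg_t cj x = 0 \<and> alg_n mul cj x = one}"

definition quadratic_cone :: "('a::real_vector \<Rightarrow> 'a \<Rightarrow> 'a) \<Rightarrow> 'a \<Rightarrow> ('a \<Rightarrow> 'a) \<Rightarrow> 'a set" where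
  "quadratic_cone mul one cj =
     range (\<lambda>c::real. c *\<^sub>R one) \<union>
     {x. \<exists>a b::real. alg_t cj x = a *\<^sub>R one \<and> alg_n mul cj x = b *\<^sub>R one \<and> 4 * b > a\<^sup>2}"

definition pderiv_dir :: "'n::real_normed_vector \<Rightarrow> ('n \<Rightarrow> 'a::real_normed_vector) \<Rightarrow> 'n \<Rightarrow> 'a" where
  "pderiv_dir b F x = vector_derivative (\<lambda>t. F (x + t *\<^sub>R b)) (at 0)"

definition laplacian :: "('n::euclidean_space \<Rightarrow> 'a::real_normed_vector) \<Rightarrow> 'n \<Rightarrow> 'a" where
  "laplacian F x = (\<Sum>b\<in>Basis. pderiv_dir b (pderiv_dir b F) x)"

definition C2_on :: "'n::euclidean_space set \<Rightarrow> ('n \<Rightarrow> 'a::real_normed_vector) \<Rightarrow> bool" where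
  "C2_on S F \<longleftrightarrow>
     (\<exists>F' F''. (\<forall>x\<in>S. (F has_derivative blinfun_apply (F' x)) (at x)) \<and>
               (\<forall>x\<in>S. (F' has_derivative blinfun_apply (F'' x)) (at x)) \<and>
               continuous_on S F'')"

definition d_r :: "('p \<times> real \<Rightarrow> 'a::real_normed_vector) \<Rightarrow> 'p::real_normed_vector \<times> real \<Rightarrow> 'a" where
  "d_r F = pderiv_dir ((0::'p), (1::real)) F"

end

theory Submission
  imports Defs
begin

lemma sum_Basis_prod_gen:
  fixes f :: "('a::euclidean_space * 'b::euclidean_space) \<Rightarrow> 'c::comm_monoid_add"
  shows "sum f Basis = sum (\<lambda>i. f (i, 0)) Basis + sum (\<lambda>i. f (0, i)) Basis"
proof -
  have "inj_on (\<lambda>u. (u::'a, 0::'b)) Basis" "inj_on (\<lambda>u. (0::'a, u::'b)) Basis"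
    by (auto intro!: inj_onI Pair_inject)
  thus ?thesis
    unfolding Basis_prod_def
    by (subst sum.union_disjoint) (auto simp: Basis_prod_def sum.reindex)
qed

lemma line_vd:
  assumes "(F has_derivative F'y) (at (z + t *\<^sub>R b))"
  shows "((\<lambda>t. F (z + t *\<^sub>R b)) has_vector_derivative F'y b) (at t)"
proof -
  have l: "((\<lambda>t. z + t *\<^sub>R b) has_derivative (\<lambda>s. s *\<^sub>R b)) (at t)"
    by (auto intro!: derivative_eq_intros)
  have "((\<lambda>t. F (z + t *\<^sub>R b)) has_derivative (\<lambda>s. F'y (s *\<^sub>R b))) (at t)"
    using has_derivative_compose[OF l assms] by (simp add: o_def)
  moreover have "linear F'y" using assms has_derivative_linear by blast
  ultimately show ?thesis unfolding has_vector_derivative_def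
    by (simp add: linear_scale)
qed

lemma pderiv_first:
  assumes "(F has_derivative F'x) (at x)"
  shows "pderiv_dir b F x = F'x b"
  unfolding pderiv_dir_def
  by (rule vector_derivative_at) (rule line_vd[where t=0, simplified], simp add: assms)

lemma second_dir:
  assumes T: "open T" "0 \<in> T"
    and d1: "\<And>t. t \<in> T \<Longrightarrow> ((\<lambda>s. F (x + s *\<^sub>R b)) has_vector_derivative g1 t) (at t)"
    and d2: "(g1 has_vector_derivative c) (at 0)"
  shows "pderiv_dir b (pderiv_dir b F) x = c"
proof -
  have eq: "pderiv_dir b F (x + t *\<^sub>R b) = g1 t" if "t \<in> T" for t
  proof -
    have "((\<lambda>s. F (x + s *\<^sub>R b)) \<circ> (\<lambda>s. t + s) has_vector_derivative (1::real) *\<^sub>R g1 t) (at 0)"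
      by (rule vector_diff_chain_at) (auto intro!: derivative_eq_intros d1 that)
    then have "((\<lambda>s. F ((x + t *\<^sub>R b) + s *\<^sub>R b)) has_vector_derivative g1 t) (at 0)"
      by (simp add: o_def scaleR_add_left add.assoc)
    then show ?thesis unfolding pderiv_dir_def by (rule vector_derivative_at)
  qed
  have "((\<lambda>t. pderiv_dir b F (x + t *\<^sub>R b)) has_vector_derivative c) (at 0)"
    by (rule has_vector_derivative_transform_within_open[OF d2 T]) (simp add: eq)
  then show ?thesis unfolding pderiv_dir_def[of b "pderiv_dir b F"]
    by (rule vector_derivative_at)
qed

lemma C2_second:
  fixes F :: "'n::euclidean_space \<Rightarrow> 'a::real_normed_vector"
  assumes S: "open S" "x \<in> S"
    and d1: "\<And>y. y \<in> S \<Longrightarrow> (F has_derivative blinfun_apply (F' y)) (at y)"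
    and d2: "\<And>y. y \<in> S \<Longrightarrow> (F' has_derivative blinfun_apply (F'' y)) (at y)"
  shows "pderiv_dir b (pderiv_dir b F) x = blinfun_apply (blinfun_apply (F'' x) b) b"
proof (rule second_dir)
  show "open ((\<lambda>t. x + t *\<^sub>R b) -` S)"
    by (rule open_vimage[OF S(1)]) (auto intro!: continuous_intros)
  show "0 \<in> (\<lambda>t. x + t *\<^sub>R b) -` S" using S by simp
  show "((\<lambda>s. F (x + s *\<^sub>R b)) has_vector_derivative blinfun_apply (F' (x + t *\<^sub>R b)) b) (at t)"
    if "t \<in> (\<lambda>t. x + t *\<^sub>R b) -` S" for t
    using that by (intro line_vd d1) simp
  have "((\<lambda>y. blinfun_apply (F' y) b) has_derivative (\<lambda>h. blinfun_apply (F'' x h) b)) (at x)"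
    using bounded_linear.has_derivative[OF blinfun.bounded_linear_left d2[OF S(2)]] .
  then show "((\<lambda>t. blinfun_apply (F' (x + t *\<^sub>R b)) b) has_vector_derivative
        blinfun_apply (blinfun_apply (F'' x) b) b) (at 0)"
    using line_vd[where z=x and t=0 and b=b and F="\<lambda>y. blinfun_apply (F' y) b"] by simp
qed

lemma C2_lap:
  fixes F :: "'n::euclidean_space \<Rightarrow> 'a::real_normed_vector"
  assumes S: "open S" "x \<in> S"
    and d1: "\<And>y. y \<in> S \<Longrightarrow> (F has_derivative blinfun_apply (F' y)) (at y)"
    and d2: "\<And>y. y \<in> S \<Longrightarrow> (F' has_derivative blinfun_apply (F'' y)) (at y)"
  shows "laplacian F x = (\<Sum>b\<in>Basis. blinfun_apply (blinfun_apply (F'' x) b) b)"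
  unfolding laplacian_def using C2_second[OF S d1 d2] by simp

lemma C2_lap_cont:
  fixes F'' :: "'n::euclidean_space \<Rightarrow> ('n \<Rightarrow>\<^sub>L 'n \<Rightarrow>\<^sub>L 'a::real_normed_vector)"
  assumes "continuous_on S F''"
  shows "continuous_on S (\<lambda>x. \<Sum>b\<in>Basis. blinfun_apply (blinfun_apply (F'' x) b) b)"
  by (intro continuous_intros assms)

lemma C2_line2:
  fixes F :: "'n::euclidean_space \<Rightarrow> 'a::real_normed_vector"
  assumes "(F' has_derivative blinfun_apply (F'' z)) (at z)"
  shows "((\<lambda>t. blinfun_apply (F' (z + t *\<^sub>R b)) b) has_vector_derivative
        blinfun_apply (blinfun_apply (F'' z) b) b) (at 0)"
proof -
  have "((\<lambda>y. blinfun_apply (F' y) b) has_derivative (\<lambda>h. blinfun_apply (F'' z h) b)) (at z)"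
    using bounded_linear.has_derivative[OF blinfun.bounded_linear_left assms] .
  then show ?thesis
    using line_vd[where z=z and t=0 and b=b and F="\<lambda>y. blinfun_apply (F' y) b"] by simp
qed

lemma d_r_1d:
  assumes "((\<lambda>s. G (xp, s)) has_vector_derivative c) (at r)"
  shows "d_r G (xp, r) = c"
proof -
  have "((\<lambda>s. G (xp, s)) \<circ> (\<lambda>t. r + t) has_vector_derivative (1::real) *\<^sub>R c) (at 0)"
    by (rule vector_diff_chain_at) (auto intro!: derivative_eq_intros assms)
  then have "((\<lambda>t. G ((xp, r) + t *\<^sub>R (0, 1))) has_vector_derivative c) (at 0)"
    by (simp add: o_def)
  then show ?thesis unfolding d_r_def pderiv_dir_def by (rule vector_derivative_at)
qed

lemma r_derivs:
  fixes F :: "'p::euclidean_space \<times> real \<Rightarrow> 'a::real_normed_vector"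
  assumes "(xp, s) \<in> S"
    and d1: "\<And>y. y \<in> S \<Longrightarrow> (F has_derivative blinfun_apply (F' y)) (at y)"
    and d2: "\<And>y. y \<in> S \<Longrightarrow> (F' has_derivative blinfun_apply (F'' y)) (at y)"
  shows "((\<lambda>s. F (xp, s)) has_vector_derivative blinfun_apply (F' (xp, s)) (0, 1)) (at s)"
    and "((\<lambda>s. blinfun_apply (F' (xp, s)) (0, 1)) has_vector_derivative
           blinfun_apply (blinfun_apply (F'' (xp, s)) (0, 1)) (0, 1)) (at s)"
proof -
  have e: "\<And>t. (xp, t) = (xp, 0) + t *\<^sub>R (0, 1::real)" by simp
  show "((\<lambda>s. F (xp, s)) has_vector_derivative blinfun_apply (F' (xp, s)) (0, 1)) (at s)"
    using line_vd[of F "F' (xp, s)" "(xp, 0)" s "(0, 1)"] d1[OF assms(1)] by simp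
  have "((\<lambda>y. blinfun_apply (F' y) (0, 1)) has_derivative (\<lambda>h. blinfun_apply (F'' (xp, s) h) (0, 1))) (at (xp, s))"
    using bounded_linear.has_derivative[OF blinfun.bounded_linear_left d2[OF assms(1)]] .
  then show "((\<lambda>s. blinfun_apply (F' (xp, s)) (0, 1)) has_vector_derivative
           blinfun_apply (blinfun_apply (F'' (xp, s)) (0, 1)) (0, 1)) (at s)"
    using line_vd[of "\<lambda>y. blinfun_apply (F' y) (0, 1)" _ "(xp, 0)" s "(0, 1)"] by simp
qed

lemma lim_quot:
  fixes g :: "real \<Rightarrow> 'a::real_normed_vector"
  assumes "(g has_vector_derivative c) (at 0)" "g 0 = 0"
  shows "((\<lambda>r. (1 / r) *\<^sub>R g r) \<longlongrightarrow> c) (at 0)"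
proof -
  have "((\<lambda>y. norm ((g y - g 0) - (\<lambda>h. h *\<^sub>R c) (y - 0)) / norm (y - 0)) \<longlongrightarrow> 0) (at 0)"
    using assms(1) unfolding has_vector_derivative_def has_derivative_iff_norm by blast
  then have "((\<lambda>y. norm ((1 / y) *\<^sub>R g y - c)) \<longlongrightarrow> 0) (at 0)"
  proof (rule Lim_transform_eventually)
    show "\<forall>\<^sub>F y in at 0. norm ((g y - g 0) - (\<lambda>h. h *\<^sub>R c) (y - 0)) / norm (y - 0) = norm ((1 / y) *\<^sub>R g y - c)"
      unfolding eventually_at_filter
    proof (intro always_eventually allI impI)
      fix y :: real assume "y \<noteq> 0"
      then have "(1 / y) *\<^sub>R g y - c = (1 / y) *\<^sub>R (g y - y *\<^sub>R c)"
        by (simp add: scaleR_diff_right)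
      then show "norm ((g y - g 0) - (\<lambda>h. h *\<^sub>R c) (y - 0)) / norm (y - 0) = norm ((1 / y) *\<^sub>R g y - c)"
        using assms(2) by (simp add: divide_inverse mult.commute)
    qed
  qed
  then show ?thesis
    by (simp add: tendsto_norm_zero_iff LIM_zero_iff)
qed

lemma lim_quot2:
  fixes h b1 b2 :: "real \<Rightarrow> 'a::real_normed_vector"
  assumes e: "e > 0"
    and dh: "\<And>s. \<bar>s\<bar> < e \<Longrightarrow> (h has_vector_derivative b1 s) (at s)"
    and db: "\<And>s. \<bar>s\<bar> < e \<Longrightarrow> (b1 has_vector_derivative b2 s) (at s)"
    and cb: "isCont b2 0" and h0: "h 0 = 0"
  shows "((\<lambda>r. (1 / r) *\<^sub>R b1 r - (1 / r\<^sup>2) *\<^sub>R h r) \<longlongrightarrow> (1 / 2) *\<^sub>R b2 0) (at 0)"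
proof -
  define \<psi> where "\<psi> s = s *\<^sub>R b1 s - h s - (s\<^sup>2 / 2) *\<^sub>R b2 0" for s
  have dpsi: "(\<psi> has_vector_derivative s *\<^sub>R (b2 s - b2 0)) (at s)" if "\<bar>s\<bar> < e" for s
  proof -
    have "(\<psi> has_vector_derivative (s *\<^sub>R b2 s + 1 *\<^sub>R b1 s) - b1 s - ((2 * s ^ 1 / 2) *\<^sub>R b2 0)) (at s)"
      unfolding \<psi>_def
      by (intro derivative_intros dh db that) (auto intro!: derivative_eq_intros)
    then show ?thesis by (simp add: scaleR_diff_right)
  qed
  show ?thesis
    unfolding LIM_eq
  proof (intro allI impI)
    fix \<epsilon> :: real assume "\<epsilon> > 0"
    then have "\<epsilon> / 2 > 0" by simp
    from cb[unfolded isCont_def LIM_eq, rule_format, OF this]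
    obtain \<delta> where \<delta>: "\<delta> > 0" "\<And>x. x \<noteq> 0 \<and> norm (x - 0) < \<delta> \<Longrightarrow> norm (b2 x - b2 0) < \<epsilon> / 2"
      by blast
    have b2b: "norm (b2 x - b2 0) \<le> \<epsilon> / 2" if "\<bar>x\<bar> < \<delta>" for x
      using \<delta>(2)[of x] that \<open>\<epsilon> > 0\<close> by (cases "x = 0") auto
    show "\<exists>d>0. \<forall>x. x \<noteq> 0 \<and> norm (x - 0) < d \<longrightarrow>
            norm ((1 / x) *\<^sub>R b1 x - (1 / x\<^sup>2) *\<^sub>R h x - (1 / 2) *\<^sub>R b2 0) < \<epsilon>"
    proof (intro exI[of _ "min \<delta> e"] conjI allI impI)
      show "min \<delta> e > 0" using \<delta> e by simp
      fix r :: real assume r: "r \<noteq> 0 \<and> norm (r - 0) < min \<delta> e"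
      have "norm (\<psi> r - \<psi> 0) \<le> (\<bar>r\<bar> * (\<epsilon> / 2)) * norm (r - 0)"
      proof (rule differentiable_bound[where S="cball 0 \<bar>r\<bar>" and f'="\<lambda>s h. h *\<^sub>R (s *\<^sub>R (b2 s - b2 0))"])
        show "convex (cball (0::real) \<bar>r\<bar>)" by simp
        show "(\<psi> has_derivative (\<lambda>h. h *\<^sub>R (s *\<^sub>R (b2 s - b2 0)))) (at s within cball 0 \<bar>r\<bar>)"
          if "s \<in> cball 0 \<bar>r\<bar>" for s
          using dpsi[of s] that r unfolding has_vector_derivative_def
          by (auto intro: has_derivative_at_withinI)
        show "onorm (\<lambda>h. h *\<^sub>R (s *\<^sub>R (b2 s - b2 0))) \<le> \<bar>r\<bar> * (\<epsilon> / 2)"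
          if "s \<in> cball 0 \<bar>r\<bar>" for s
        proof -
          have "onorm (\<lambda>h. h *\<^sub>R (s *\<^sub>R (b2 s - b2 0))) = onorm (\<lambda>h::real. h) * norm (s *\<^sub>R (b2 s - b2 0))"
            by (rule onorm_scaleR_left) (rule bounded_linear_ident)
          also have "\<dots> = \<bar>s\<bar> * norm (b2 s - b2 0)" by (simp add: onorm_id)
          also have "\<dots> \<le> \<bar>r\<bar> * (\<epsilon> / 2)"
            using that r b2b[of s] by (intro mult_mono) auto
          finally show ?thesis .
        qed
      qed (auto)
      moreover have "\<psi> 0 = 0" using h0 by (simp add: \<psi>_def)
      moreover have "(1 / r) *\<^sub>R b1 r - (1 / r\<^sup>2) *\<^sub>R h r - (1 / 2) *\<^sub>R b2 0 = (1 / r\<^sup>2) *\<^sub>R \<psi> r"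
        using r by (simp add: \<psi>_def scaleR_diff_right power2_eq_square field_simps)
      ultimately have n1: "2 * norm (\<psi> r) \<le> \<epsilon> * (r * r)" and
        eq: "(1 / r) *\<^sub>R b1 r - (1 / r\<^sup>2) *\<^sub>R h r - (1 / 2) *\<^sub>R b2 0 = (1 / r\<^sup>2) *\<^sub>R \<psi> r"
        by (simp_all add: mult.commute mult.left_commute)
      have rr: "r * r > 0" using r by (auto simp add: zero_less_mult_iff linorder_neq_iff)
      have "norm ((1 / r) *\<^sub>R b1 r - (1 / r\<^sup>2) *\<^sub>R h r - (1 / 2) *\<^sub>R b2 0) = norm (\<psi> r) / (r * r)"
        unfolding eq by (simp add: power2_eq_square)
      also have "\<dots> \<le> \<epsilon> / 2" using n1 rr by (simp add: pos_divide_le_eq)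
      finally have "norm ((1 / r) *\<^sub>R b1 r - (1 / r\<^sup>2) *\<^sub>R h r - (1 / 2) *\<^sub>R b2 0) \<le> \<epsilon> / 2" .
      then show "norm ((1 / r) *\<^sub>R b1 r - (1 / r\<^sup>2) *\<^sub>R h r - (1 / 2) *\<^sub>R b2 0) < \<epsilon>"
        using \<open>\<epsilon> > 0\<close> by simp
    qed
  qed
qed

lemma rho_deriv:
  fixes y0 b :: "'q::real_inner"
  assumes "y0 + t *\<^sub>R b \<noteq> 0"
  shows "((\<lambda>t. norm (y0 + t *\<^sub>R b)) has_real_derivative
            (((y0 + t *\<^sub>R b) \<bullet> b) / norm (y0 + t *\<^sub>R b))) (at t)"
proof -
  let ?x = "y0 + t *\<^sub>R b"
  have l: "((\<lambda>t. y0 + t *\<^sub>R b) has_derivative (\<lambda>s. s *\<^sub>R b)) (at t)"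
    by (auto intro!: derivative_eq_intros)
  have n: "(norm has_derivative (\<lambda>h. h \<bullet> sgn ?x)) (at ?x)"
    using has_derivative_norm[OF assms] .
  have c: "((\<lambda>t. norm (y0 + t *\<^sub>R b)) has_derivative (\<lambda>s. (s *\<^sub>R b) \<bullet> sgn ?x)) (at t)"
    using has_derivative_compose[OF l n] by (simp add: o_def)
  have eq: "(\<lambda>s. (s *\<^sub>R b) \<bullet> sgn ?x) = (*) ((?x \<bullet> b) / norm ?x)"
    by (auto simp: sgn_div_norm inner_commute divide_inverse mult.commute)
  from c[unfolded eq] show ?thesis
    unfolding has_field_derivative_def .
qed

lemma q_dir_1d:
  fixes h1 a1 a2 h2 b1 b2 :: "real \<Rightarrow> 'a::real_normed_vector"
    and mul :: "'a \<Rightarrow> 'a \<Rightarrow> 'a" and L :: "'q::euclidean_space \<Rightarrow> 'a" and w b :: 'q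
  assumes mb: "bounded_bilinear mul" and Ll: "linear L"
    and r: "r > 0" and e: "e > 0" "e \<le> r" and w: "norm w = 1" and b: "norm b = 1"
    and dh1: "\<And>s. \<bar>s - r\<bar> < e \<Longrightarrow> (h1 has_vector_derivative a1 s) (at s)"
    and da1: "\<And>s. \<bar>s - r\<bar> < e \<Longrightarrow> (a1 has_vector_derivative a2 s) (at s)"
    and dh2: "\<And>s. \<bar>s - r\<bar> < e \<Longrightarrow> (h2 has_vector_derivative b1 s) (at s)"
    and db1: "\<And>s. \<bar>s - r\<bar> < e \<Longrightarrow> (b1 has_vector_derivative b2 s) (at s)"
  shows "\<exists>g1. (\<forall>t. \<bar>norm (r *\<^sub>R w + t *\<^sub>R b) - r\<bar> < e \<longrightarrow>
            ((\<lambda>t. h1 (norm (r *\<^sub>R w + t *\<^sub>R b)) + mul (L (r *\<^sub>R w + t *\<^sub>R b))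
                   ((1 / norm (r *\<^sub>R w + t *\<^sub>R b)) *\<^sub>R h2 (norm (r *\<^sub>R w + t *\<^sub>R b))))
              has_vector_derivative g1 t) (at t)) \<and>
         (g1 has_vector_derivative
            (((1 - (w \<bullet> b)\<^sup>2) / r) *\<^sub>R a1 r + (w \<bullet> b)\<^sup>2 *\<^sub>R a2 r
             + 2 *\<^sub>R mul ((w \<bullet> b) *\<^sub>R L b) ((1 / r) *\<^sub>R b1 r - (1 / r\<^sup>2) *\<^sub>R h2 r)
             + mul (L w) ((1 - (w \<bullet> b)\<^sup>2) *\<^sub>R ((1 / r) *\<^sub>R b1 r - (1 / r\<^sup>2) *\<^sub>R h2 r)
                 + (w \<bullet> b)\<^sup>2 *\<^sub>R (r *\<^sub>R ((1 / r) *\<^sub>R b2 r - (2 / r\<^sup>2) *\<^sub>R b1 r + (2 / r ^ 3) *\<^sub>R h2 r)))))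
          (at 0)"
proof -
  interpret mb: bounded_bilinear mul by (rule mb)
  define c where "c = w \<bullet> b"
  define y0 where "y0 = r *\<^sub>R w"
  define \<rho> where "\<rho> t = norm (y0 + t *\<^sub>R b)" for t
  define \<rho>1 where "\<rho>1 t = (r * c + t) / \<rho> t" for t
  define k where "k s = (1 / s) *\<^sub>R h2 s" for s
  define k1 where "k1 s = (1 / s) *\<^sub>R b1 s - (1 / s\<^sup>2) *\<^sub>R h2 s" for s
  define k2 where "k2 s = (1 / s) *\<^sub>R b2 s - (2 / s\<^sup>2) *\<^sub>R b1 s + (2 / s ^ 3) *\<^sub>R h2 s" for s
  have bb: "b \<bullet> b = 1" using b by (simp add: dot_square_norm)
  have \<rho>0: "\<rho> 0 = r" using w r by (simp add: \<rho>_def y0_def)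
  have in_b: "(y0 + t *\<^sub>R b) \<bullet> b = r * c + t" for t
    by (simp add: y0_def c_def inner_add_left bb)
  have \<rho>pos: "\<rho> t > 0" if "\<bar>\<rho> t - r\<bar> < e" for t using that e by linarith
  have d\<rho>: "(\<rho> has_vector_derivative \<rho>1 t) (at t)" if "\<bar>\<rho> t - r\<bar> < e" for t
  proof -
    have "y0 + t *\<^sub>R b \<noteq> 0" using \<rho>pos[OF that] by (auto simp: \<rho>_def)
    from rho_deriv[OF this] have "((\<lambda>t. norm (y0 + t *\<^sub>R b)) has_real_derivative \<rho>1 t) (at t)"
      by (simp add: \<rho>1_def \<rho>_def in_b)
    then show ?thesis
      by (simp add: has_real_derivative_iff_has_vector_derivative \<rho>_def[abs_def])
  qed
  have \<rho>0e: "\<bar>\<rho> 0 - r\<bar> < e" using \<rho>0 e by simp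
  have \<rho>1_0: "\<rho>1 0 = c" using r by (simp add: \<rho>1_def \<rho>0)
  have d\<rho>1: "(\<rho>1 has_real_derivative ((1 - c\<^sup>2) / r)) (at 0)"
  proof -
    have "((\<lambda>t. (r * c + t) / \<rho> t) has_real_derivative ((1 * \<rho> 0 - (r * c + 0) * \<rho>1 0) / (\<rho> 0 * \<rho> 0))) (at 0)"
      using d\<rho>[OF \<rho>0e] unfolding has_real_derivative_iff_has_vector_derivative[symmetric]
      by (intro derivative_eq_intros) (use r in \<open>auto simp: \<rho>0\<close>)
    moreover have "(1 * \<rho> 0 - (r * c + 0) * \<rho>1 0) / (\<rho> 0 * \<rho> 0) = (1 - c\<^sup>2) / r"
      using r by (simp add: \<rho>0 \<rho>1_0 power2_eq_square field_simps)
    ultimately show ?thesis by (simp add: \<rho>1_def[abs_def])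
  qed
  have dk: "(k has_vector_derivative k1 s) (at s)" if "\<bar>s - r\<bar> < e" for s
  proof -
    have s0: "s \<noteq> 0" using that e by auto
    have "((\<lambda>s. (1 / s) *\<^sub>R h2 s) has_vector_derivative ((1 / s) *\<^sub>R b1 s + ((0 * s - 1 * 1) / (s * s)) *\<^sub>R h2 s)) (at s)"
      using dh2[OF that] by (intro derivative_eq_intros) (auto simp: s0)
    then show ?thesis unfolding k_def[abs_def] k1_def
      by (rule has_vector_derivative_eq_rhs) (simp add: power2_eq_square)
  qed
  have dk1: "(k1 has_vector_derivative k2 r) (at r)"
  proof -
    have r0: "r \<noteq> 0" using r by simp
    have re: "\<bar>r - r\<bar> < e" using e by simp
    have "((\<lambda>s. (1 / s) *\<^sub>R b1 s - (1 / s\<^sup>2) *\<^sub>R h2 s) has_vector_derivative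
        ((1 / r) *\<^sub>R b2 r + ((0 * r - 1 * 1) / (r * r)) *\<^sub>R b1 r -
         ((1 / r\<^sup>2) *\<^sub>R b1 r + ((0 * r\<^sup>2 - 1 * (2 * r ^ 1 * 1)) / (r\<^sup>2 * r\<^sup>2)) *\<^sub>R h2 r))) (at r)"
      using dh2[OF re] db1[OF re] by (intro derivative_eq_intros) (auto simp: r0)
    then show ?thesis unfolding k1_def[abs_def]
    proof (rule has_vector_derivative_eq_rhs)
      have co1: "(0 * r - 1 * 1) / (r * r) - 1 / r\<^sup>2 = - (2 / r\<^sup>2)"
        using r0 by (simp add: power2_eq_square field_simps)
      have co2: "- ((0 * r\<^sup>2 - 1 * (2 * r ^ 1 * 1)) / (r\<^sup>2 * r\<^sup>2)) = 2 / r ^ 3"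
        using r0 by (simp add: power2_eq_square power3_eq_cube field_simps)
      have "(1 / r) *\<^sub>R b2 r + ((0 * r - 1 * 1) / (r * r)) *\<^sub>R b1 r -
         ((1 / r\<^sup>2) *\<^sub>R b1 r + ((0 * r\<^sup>2 - 1 * (2 * r ^ 1 * 1)) / (r\<^sup>2 * r\<^sup>2)) *\<^sub>R h2 r)
        = (1 / r) *\<^sub>R b2 r + ((0 * r - 1 * 1) / (r * r) - 1 / r\<^sup>2) *\<^sub>R b1 r
          + (- ((0 * r\<^sup>2 - 1 * (2 * r ^ 1 * 1)) / (r\<^sup>2 * r\<^sup>2))) *\<^sub>R h2 r"
        by (simp only: scaleR_diff_left scaleR_minus_left) (simp add: algebra_simps)
      also have "\<dots> = k2 r" unfolding co1 co2 k2_def by (simp add: algebra_simps)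
      finally show "(1 / r) *\<^sub>R b2 r + ((0 * r - 1 * 1) / (r * r)) *\<^sub>R b1 r -
         ((1 / r\<^sup>2) *\<^sub>R b1 r + ((0 * r\<^sup>2 - 1 * (2 * r ^ 1 * 1)) / (r\<^sup>2 * r\<^sup>2)) *\<^sub>R h2 r) = k2 r" .
    qed
  qed
  define g1 where "g1 t = \<rho>1 t *\<^sub>R a1 (\<rho> t) + (mul (L y0 + t *\<^sub>R L b) (\<rho>1 t *\<^sub>R k1 (\<rho> t)) + mul (L b) (k (\<rho> t)))" for t
  have Ly: "L (y0 + t *\<^sub>R b) = L y0 + t *\<^sub>R L b" for t
    using Ll by (simp add: linear_add linear_scale)
  have part1: "((\<lambda>t. h1 (norm (r *\<^sub>R w + t *\<^sub>R b)) + mul (L (r *\<^sub>R w + t *\<^sub>R b))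
                   ((1 / norm (r *\<^sub>R w + t *\<^sub>R b)) *\<^sub>R h2 (norm (r *\<^sub>R w + t *\<^sub>R b))))
              has_vector_derivative g1 t) (at t)" if "\<bar>norm (r *\<^sub>R w + t *\<^sub>R b) - r\<bar> < e" for t
  proof -
    have te: "\<bar>\<rho> t - r\<bar> < e" using that by (simp add: \<rho>_def y0_def)
    have c1: "((h1 \<circ> \<rho>) has_vector_derivative \<rho>1 t *\<^sub>R a1 (\<rho> t)) (at t)"
      by (rule vector_diff_chain_at[OF d\<rho>[OF te] dh1[OF te]])
    have c2: "((k \<circ> \<rho>) has_vector_derivative \<rho>1 t *\<^sub>R k1 (\<rho> t)) (at t)"
      by (rule vector_diff_chain_at[OF d\<rho>[OF te] dk[OF te]])
    have c3: "((\<lambda>t. L y0 + t *\<^sub>R L b) has_vector_derivative L b) (at t)"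
      by (rule has_vector_derivative_eq_rhs, (rule derivative_intros)+) simp
    have c4: "((\<lambda>t. mul (L y0 + t *\<^sub>R L b) ((k \<circ> \<rho>) t)) has_vector_derivative
        mul (L y0 + t *\<^sub>R L b) (\<rho>1 t *\<^sub>R k1 (\<rho> t)) + mul (L b) ((k \<circ> \<rho>) t)) (at t)"
      by (rule mb.has_vector_derivative[OF c3 c2])
    have "((\<lambda>t. (h1 \<circ> \<rho>) t + mul (L y0 + t *\<^sub>R L b) ((k \<circ> \<rho>) t)) has_vector_derivative g1 t) (at t)"
      unfolding g1_def using has_vector_derivative_add[OF c1 c4] by simp
    then show ?thesis
      by (simp add: \<rho>_def y0_def k_def Ly[unfolded y0_def] o_def)
  qed
  have part2: "(g1 has_vector_derivative
      (c *\<^sub>R (c *\<^sub>R a2 r) + ((1 - c\<^sup>2) / r) *\<^sub>R a1 r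
      + (mul (L y0) (c *\<^sub>R (c *\<^sub>R k2 r) + ((1 - c\<^sup>2) / r) *\<^sub>R k1 r) + mul (L b) (c *\<^sub>R k1 r))
      + (mul (L b) (c *\<^sub>R k1 r) + mul 0 (k r)))) (at 0)"
  proof -
    have c1: "((a1 \<circ> \<rho>) has_vector_derivative \<rho>1 0 *\<^sub>R a2 (\<rho> 0)) (at 0)"
      by (rule vector_diff_chain_at[OF d\<rho>[OF \<rho>0e] da1[OF \<rho>0e]])
    have c2: "((k1 \<circ> \<rho>) has_vector_derivative \<rho>1 0 *\<^sub>R k2 (\<rho> 0)) (at 0)"
      by (rule vector_diff_chain_at[OF d\<rho>[OF \<rho>0e]]) (simp add: \<rho>0 dk1)
    have c2': "((k \<circ> \<rho>) has_vector_derivative \<rho>1 0 *\<^sub>R k1 (\<rho> 0)) (at 0)"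
      by (rule vector_diff_chain_at[OF d\<rho>[OF \<rho>0e] dk[OF \<rho>0e]])
    have s1: "((\<lambda>t. \<rho>1 t *\<^sub>R (a1 \<circ> \<rho>) t) has_vector_derivative
        \<rho>1 0 *\<^sub>R (\<rho>1 0 *\<^sub>R a2 (\<rho> 0)) + ((1 - c\<^sup>2) / r) *\<^sub>R (a1 \<circ> \<rho>) 0) (at 0)"
      by (rule has_vector_derivative_scaleR[OF d\<rho>1 c1])
    have s2: "((\<lambda>t. \<rho>1 t *\<^sub>R (k1 \<circ> \<rho>) t) has_vector_derivative
        \<rho>1 0 *\<^sub>R (\<rho>1 0 *\<^sub>R k2 (\<rho> 0)) + ((1 - c\<^sup>2) / r) *\<^sub>R (k1 \<circ> \<rho>) 0) (at 0)"
      by (rule has_vector_derivative_scaleR[OF d\<rho>1 c2])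
    have c3: "((\<lambda>t. L y0 + t *\<^sub>R L b) has_vector_derivative L b) (at 0)"
      by (rule has_vector_derivative_eq_rhs, (rule derivative_intros)+) simp
    have s3: "((\<lambda>t. mul (L y0 + t *\<^sub>R L b) (\<rho>1 t *\<^sub>R (k1 \<circ> \<rho>) t)) has_vector_derivative
        mul (L y0 + 0 *\<^sub>R L b) (\<rho>1 0 *\<^sub>R (\<rho>1 0 *\<^sub>R k2 (\<rho> 0)) + ((1 - c\<^sup>2) / r) *\<^sub>R (k1 \<circ> \<rho>) 0)
        + mul (L b) (\<rho>1 0 *\<^sub>R (k1 \<circ> \<rho>) 0)) (at 0)"
      by (rule mb.has_vector_derivative[OF c3 s2])
    have s4: "((\<lambda>t. mul (L b) ((k \<circ> \<rho>) t)) has_vector_derivative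
        mul (L b) (\<rho>1 0 *\<^sub>R k1 (\<rho> 0)) + mul 0 ((k \<circ> \<rho>) 0)) (at 0)"
      by (rule mb.has_vector_derivative[OF has_vector_derivative_const c2'])
    have "(g1 has_vector_derivative
        (\<rho>1 0 *\<^sub>R (\<rho>1 0 *\<^sub>R a2 (\<rho> 0)) + ((1 - c\<^sup>2) / r) *\<^sub>R (a1 \<circ> \<rho>) 0)
        + (mul (L y0 + 0 *\<^sub>R L b) (\<rho>1 0 *\<^sub>R (\<rho>1 0 *\<^sub>R k2 (\<rho> 0)) + ((1 - c\<^sup>2) / r) *\<^sub>R (k1 \<circ> \<rho>) 0)
        + mul (L b) (\<rho>1 0 *\<^sub>R (k1 \<circ> \<rho>) 0))
        + (mul (L b) (\<rho>1 0 *\<^sub>R k1 (\<rho> 0)) + mul 0 ((k \<circ> \<rho>) 0))) (at 0)"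
      unfolding g1_def[abs_def]
      using has_vector_derivative_add[OF s1 has_vector_derivative_add[OF s3 s4]]
      by (simp only: o_def scaleR_zero_left add_0_right add.assoc)
    then show ?thesis by (simp add: \<rho>0 \<rho>1_0)
  qed
  have fin: "c *\<^sub>R (c *\<^sub>R a2 r) + ((1 - c\<^sup>2) / r) *\<^sub>R a1 r
      + (mul (L y0) (c *\<^sub>R (c *\<^sub>R k2 r) + ((1 - c\<^sup>2) / r) *\<^sub>R k1 r) + mul (L b) (c *\<^sub>R k1 r))
      + (mul (L b) (c *\<^sub>R k1 r) + mul 0 (k r))
    = ((1 - c\<^sup>2) / r) *\<^sub>R a1 r + c\<^sup>2 *\<^sub>R a2 r + 2 *\<^sub>R mul (c *\<^sub>R L b) (k1 r)
      + mul (L w) ((1 - c\<^sup>2) *\<^sub>R k1 r + c\<^sup>2 *\<^sub>R (r *\<^sub>R k2 r))"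
  proof -
    have Ly0: "L y0 = r *\<^sub>R L w" using Ll by (simp add: y0_def linear_scale)
    have r0: "r \<noteq> 0" using r by simp
    show ?thesis
      unfolding Ly0 mb.scaleR_left mb.scaleR_right mb.add_right mb.zero_left
      using r0 apply (simp add: power2_eq_square algebra_simps scaleR_2)
      apply (simp add: scaleR_add_left[symmetric] add.assoc[symmetric])
      apply (subgoal_tac "c * c + (r - c * (c * r)) / r = 1")
       apply (simp add: mult.commute)
      apply (simp add: field_simps)
      done
  qed
  have p2: "(g1 has_vector_derivative ((1 - c\<^sup>2) / r) *\<^sub>R a1 r + c\<^sup>2 *\<^sub>R a2 r + 2 *\<^sub>R mul (c *\<^sub>R L b) (k1 r)
      + mul (L w) ((1 - c\<^sup>2) *\<^sub>R k1 r + c\<^sup>2 *\<^sub>R (r *\<^sub>R k2 r))) (at 0)"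
    using part2 unfolding fin .
  show ?thesis
    apply (rule exI[of _ g1])
    using part1 p2 unfolding c_def k1_def k2_def by blast
qed

lemma inv_scale_deriv:
  fixes h :: "real \<Rightarrow> 'a::real_normed_vector"
  assumes "s \<noteq> 0" "(h has_vector_derivative d) (at s)"
  shows "((\<lambda>s. (1 / s) *\<^sub>R h s) has_vector_derivative (1 / s) *\<^sub>R d - (1 / s\<^sup>2) *\<^sub>R h s) (at s)"
proof -
  have "((\<lambda>s. (1 / s) *\<^sub>R h s) has_vector_derivative ((1 / s) *\<^sub>R d + ((0 * s - 1 * 1) / (s * s)) *\<^sub>R h s)) (at s)"
    using assms by (intro derivative_eq_intros) auto
  then show ?thesis
    by (rule has_vector_derivative_eq_rhs) (simp add: power2_eq_square)
qed

lemma even_deriv0: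
  fixes h :: "real \<Rightarrow> 'a::real_normed_vector"
  assumes "e > 0" "\<And>s. \<bar>s\<bar> < e \<Longrightarrow> h (- s) = h s" "(h has_vector_derivative d) (at 0)"
  shows "d = 0"
proof -
  have "((h \<circ> (\<lambda>s. - s)) has_vector_derivative (-1) *\<^sub>R d) (at 0)"
    by (rule vector_diff_chain_at) (auto intro!: derivative_eq_intros assms(3))
  then have "(h has_vector_derivative (-1) *\<^sub>R d) (at 0)"
  proof (rule has_vector_derivative_transform_within_open)
    show "open (ball (0::real) e)" by simp
    show "(0::real) \<in> ball 0 e" using assms(1) by simp
    show "(h \<circ> uminus) y = h y" if "y \<in> ball 0 e" for y using that assms(2)[of y] by simp
  qed
  with assms(3) have "d = (-1) *\<^sub>R d" by (rule vector_derivative_unique_at)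
  then show ?thesis by (simp add: eq_neg_iff_add_eq_0) (metis scaleR_2 scaleR_eq_0_iff zero_neq_numeral)
qed

lemma lap_tendsto:
  fixes F :: "'n::euclidean_space \<Rightarrow> 'a::real_normed_vector"
  assumes S: "open S" "x0 \<in> S"
    and d1: "\<And>y. y \<in> S \<Longrightarrow> (F has_derivative blinfun_apply (F' y)) (at y)"
    and d2: "\<And>y. y \<in> S \<Longrightarrow> (F' has_derivative blinfun_apply (F'' y)) (at y)"
    and c: "continuous_on S F''"
    and g: "(g \<longlongrightarrow> x0) Fl"
  shows "((\<lambda>s. laplacian F (g s)) \<longlongrightarrow> laplacian F x0) Fl"
proof -
  define LF where "LF x = (\<Sum>b\<in>Basis. blinfun_apply (blinfun_apply (F'' x) b) b)" for x
  have "continuous_on S LF" unfolding LF_def[abs_def] by (rule C2_lap_cont[OF c])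
  then have "isCont LF x0" using S continuous_on_eq_continuous_at by blast
  then have l: "((\<lambda>s. LF (g s)) \<longlongrightarrow> LF x0) Fl" by (rule isCont_tendsto_compose[OF _ g])
  have ev: "\<forall>\<^sub>F s in Fl. g s \<in> S" by (rule topological_tendstoD[OF g S])
  have "((\<lambda>s. laplacian F (g s)) \<longlongrightarrow> LF x0) Fl"
    by (rule Lim_transform_eventually[OF l]) (rule eventually_mono[OF ev], simp add: LF_def C2_lap[OF S(1) _ d1 d2])
  then show ?thesis by (simp add: LF_def C2_lap[OF S d1 d2])
qed

theorem lemma4p2:
  fixes mul :: "'a::euclidean_space \<Rightarrow> 'a \<Rightarrow> 'a"
    and one :: 'a and cj :: "'a \<Rightarrow> 'a"
    and v :: "'p1::finite + 'q::finite \<Rightarrow> 'a"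
    and i0 :: 'p1
    and D :: "((real, 'p1) vec \<times> real) set"
    and F1 F2 :: "(real, 'p1) vec \<times> real \<Rightarrow> 'a"
    and f :: "(real, 'p1) vec \<times> (real, 'q) vec \<Rightarrow> 'a"
  assumes alg: "alt_algebra_invol mul one cj"
    and dim: "DIM('a) > 1"
    and sph_ne: "sphere_A mul one cj \<noteq> {}"
    and v_inj: "inj v" and v_indep: "independent (range v)"
    and v0: "v (Inl i0) = one"
    and v_sph: "\<And>s. s \<noteq> Inl i0 \<Longrightarrow> v s \<in> sphere_A mul one cj"
    and v_anti: "\<And>s t. s \<noteq> Inl i0 \<Longrightarrow> t \<noteq> Inl i0 \<Longrightarrow> s \<noteq> t \<Longrightarrow>
                   mul (v s) (v t) = - mul (v t) (v s)"
    and M_sub: "span (range v) \<subseteq> quadratic_cone mul one cj"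
    and D_open: "open D"
    and D_refl: "\<And>xp r. (xp, r) \<in> D \<Longrightarrow> (xp, - r) \<in> D"
    and F1_even: "\<And>xp r. (xp, r) \<in> D \<Longrightarrow> F1 (xp, - r) = F1 (xp, r)"
    and F2_odd: "\<And>xp r. (xp, r) \<in> D \<Longrightarrow> F2 (xp, - r) = - F2 (xp, r)"
    and F1_C2: "C2_on D F1" and F2_C2: "C2_on D F2"
    and f_def: "\<And>xp r w. (xp, r) \<in> D \<Longrightarrow> r \<ge> 0 \<Longrightarrow> norm w = 1 \<Longrightarrow>
                   f (xp, r *\<^sub>R w) = F1 (xp, r) + mul (\<Sum>j\<in>UNIV. w $ j *\<^sub>R v (Inr j)) (F2 (xp, r))"
    and f_C2: "C2_on {(xp, y). (xp, norm y) \<in> D} f"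
  shows
    "(\<forall>xp. (xp, 0) \<in> D \<longrightarrow>
        ((\<lambda>r. (1 / r) *\<^sub>R d_r F1 (xp, r)) \<longlongrightarrow> d_r (d_r F1) (xp, 0)) (at 0) \<and>
        ((\<lambda>r. d_r (\<lambda>z. (1 / snd z) *\<^sub>R F2 z) (xp, r)) \<longlongrightarrow> (1 / 2) *\<^sub>R d_r (d_r F2) (xp, 0)) (at 0))
     \<and>
     (\<forall>xp r w. (xp, r) \<in> D \<longrightarrow> r \<ge> 0 \<longrightarrow> norm w = 1 \<longrightarrow>
        (let om = (\<Sum>j\<in>UNIV. w $ j *\<^sub>R v (Inr j));
             T1 = (if r = 0 then d_r (d_r F1) (xp, 0) else (1 / r) *\<^sub>R d_r F1 (xp, r));
             T2 = (if r = 0 then (1 / 2) *\<^sub>R d_r (d_r F2) (xp, 0)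
                   else d_r (\<lambda>z. (1 / snd z) *\<^sub>R F2 z) (xp, r))
         in laplacian f (xp, r *\<^sub>R w) =
              laplacian F1 (xp, r) + mul om (laplacian F2 (xp, r))
              + (real CARD('q) - 1) *\<^sub>R (T1 + mul om T2)))"
proof -
  have mbl: "bounded_bilinear mul"
    using alg unfolding alt_algebra_invol_def using bilinear_conv_bounded_bilinear by blast
  interpret mb: bounded_bilinear mul by (rule mbl)
  obtain F1' F1'' where F1d1: "\<And>y. y \<in> D \<Longrightarrow> (F1 has_derivative blinfun_apply (F1' y)) (at y)"
      and F1d2: "\<And>y. y \<in> D \<Longrightarrow> (F1' has_derivative blinfun_apply (F1'' y)) (at y)"
      and F1c: "continuous_on D F1''"
    using F1_C2 unfolding C2_on_def by blast
  obtain F2' F2'' where F2d1: "\<And>y. y \<in> D \<Longrightarrow> (F2 has_derivative blinfun_apply (F2' y)) (at y)"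
      and F2d2: "\<And>y. y \<in> D \<Longrightarrow> (F2' has_derivative blinfun_apply (F2'' y)) (at y)"
      and F2c: "continuous_on D F2''"
    using F2_C2 unfolding C2_on_def by blast
  define U :: "((real, 'p1) vec \<times> (real, 'q) vec) set" where "U = {(xp, y). (xp, norm y) \<in> D}"
  obtain f' f'' where fd1: "\<And>y. y \<in> U \<Longrightarrow> (f has_derivative blinfun_apply (f' y)) (at y)"
      and fd2: "\<And>y. y \<in> U \<Longrightarrow> (f' has_derivative blinfun_apply (f'' y)) (at y)"
      and fc: "continuous_on U f''"
    using f_C2 unfolding C2_on_def U_def by blast
  have U_open: "open U"
  proof -
    have "U = (\<lambda>z. (fst z, norm (snd z))) -` D" by (auto simp: U_def)
    also have "open \<dots>" by (rule open_vimage[OF D_open]) (intro continuous_intros)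
    finally show ?thesis .
  qed
  define e01 where "e01 = (0::(real, 'p1) vec, 1::real)"
  define a1 where "a1 xp s = blinfun_apply (F1' (xp, s)) e01" for xp s
  define a2 where "a2 xp s = blinfun_apply (blinfun_apply (F1'' (xp, s)) e01) e01" for xp s
  define b1 where "b1 xp s = blinfun_apply (F2' (xp, s)) e01" for xp s
  define b2 where "b2 xp s = blinfun_apply (blinfun_apply (F2'' (xp, s)) e01) e01" for xp s
  have dh1: "((\<lambda>s. F1 (xp, s)) has_vector_derivative a1 xp s) (at s)"
    and da1: "(a1 xp has_vector_derivative a2 xp s) (at s)"
    if "(xp, s) \<in> D" for xp s
    using r_derivs[of xp s D F1 F1' F1'', OF that F1d1 F1d2]
    unfolding a1_def[abs_def] a2_def e01_def by simp_all
  have dh2: "((\<lambda>s. F2 (xp, s)) has_vector_derivative b1 xp s) (at s)"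
    and db1: "(b1 xp has_vector_derivative b2 xp s) (at s)"
    if "(xp, s) \<in> D" for xp s
    using r_derivs[of xp s D F2 F2' F2'', OF that F2d1 F2d2]
    unfolding b1_def[abs_def] b2_def e01_def by simp_all
  have drF1: "d_r F1 (xp, s) = a1 xp s" if "(xp, s) \<in> D" for xp s
    by (rule d_r_1d) (rule dh1[OF that])
  have drrF1: "d_r (d_r F1) (xp, s) = a2 xp s" if "(xp, s) \<in> D" for xp s
    unfolding d_r_def a2_def e01_def using C2_second[OF D_open that F1d1 F1d2] by simp
  have drrF2: "d_r (d_r F2) (xp, s) = b2 xp s" if "(xp, s) \<in> D" for xp s
    unfolding d_r_def b2_def e01_def using C2_second[OF D_open that F2d1 F2d2] by simp
  have drG: "d_r (\<lambda>z. (1 / snd z) *\<^sub>R F2 z) (xp, s) = (1 / s) *\<^sub>R b1 xp s - (1 / s\<^sup>2) *\<^sub>R F2 (xp, s)"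
    if "(xp, s) \<in> D" "s \<noteq> 0" for xp s
    by (rule d_r_1d) (simp add: inv_scale_deriv[OF that(2) dh2[OF that(1)]])
  have ball_D: "\<exists>e>0. \<forall>s. \<bar>s - r\<bar> < e \<longrightarrow> (xp, s) \<in> D" if xr: "(xp, r) \<in> D" for xp r
  proof -
    obtain e where e: "e > 0" "ball (xp, r) e \<subseteq> D"
      using openE[OF D_open xr] by metis
    have "(xp, s) \<in> D" if "\<bar>s - r\<bar> < e" for s
    proof -
      have "dist (xp, r) (xp, s) = \<bar>s - r\<bar>"
        by (simp add: dist_Pair_Pair dist_real_def abs_minus_commute)
      then show ?thesis using e that by auto
    qed
    then show ?thesis using e by blast
  qed
  have part1: "((\<lambda>r. (1 / r) *\<^sub>R d_r F1 (xp, r)) \<longlongrightarrow> d_r (d_r F1) (xp, 0)) (at 0) \<and>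
        ((\<lambda>r. d_r (\<lambda>z. (1 / snd z) *\<^sub>R F2 z) (xp, r)) \<longlongrightarrow> (1 / 2) *\<^sub>R d_r (d_r F2) (xp, 0)) (at 0)"
    if x0: "(xp, 0) \<in> D" for xp
  proof -
    obtain e where e: "e > 0" "\<And>s. \<bar>s - 0\<bar> < e \<Longrightarrow> (xp, s) \<in> D" using ball_D[OF x0] by blast
    have eD: "(xp, s) \<in> D" if "\<bar>s\<bar> < e" for s using e(2)[of s] that by simp
    have a10: "a1 xp 0 = 0"
    proof (rule even_deriv0[OF e(1), of "\<lambda>s. F1 (xp, s)"])
      show "F1 (xp, - s) = F1 (xp, s)" if "\<bar>s\<bar> < e" for s using F1_even[OF eD[OF that]] .
      show "((\<lambda>s. F1 (xp, s)) has_vector_derivative a1 xp 0) (at 0)" by (rule dh1[OF x0])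
    qed
    have h20: "F2 (xp, 0) = 0" using F2_odd[OF x0]
      by simp (metis eq_neg_iff_add_eq_0 scaleR_2 scaleR_eq_0_iff zero_neq_numeral)
    have ev: "\<forall>\<^sub>F r in at (0::real). \<bar>r\<bar> < e \<and> r \<noteq> 0"
      unfolding eventually_at using e(1) by (auto simp: dist_real_def intro!: exI[of _ e])
    have L1: "((\<lambda>r. (1 / r) *\<^sub>R a1 xp r) \<longlongrightarrow> a2 xp 0) (at 0)"
      by (rule lim_quot[OF da1[OF x0] a10])
    have L1': "((\<lambda>r. (1 / r) *\<^sub>R d_r F1 (xp, r)) \<longlongrightarrow> d_r (d_r F1) (xp, 0)) (at 0)"
      unfolding drrF1[OF x0]
      by (rule Lim_transform_eventually[OF L1]) (rule eventually_mono[OF ev], simp add: drF1 eD)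
    have cont: "isCont F2'' (xp, 0)"
      using F2c D_open x0 continuous_on_eq_continuous_at by blast
    have cont2: "isCont (b2 xp) 0"
      unfolding b2_def[abs_def]
    proof (intro continuous_intros)
      show "isCont (\<lambda>s. F2'' (xp, s)) 0"
        by (rule isCont_o2[where f="\<lambda>s. (xp, s)" and a=0 and g=F2'']) (auto intro!: continuous_intros cont)
    qed
    have L2: "((\<lambda>r. (1 / r) *\<^sub>R b1 xp r - (1 / r\<^sup>2) *\<^sub>R F2 (xp, r)) \<longlongrightarrow> (1 / 2) *\<^sub>R b2 xp 0) (at 0)"
      by (rule lim_quot2[OF e(1), of "\<lambda>s. F2 (xp, s)"]) (use dh2 db1 eD cont2 h20 in auto)
    have L2': "((\<lambda>r. d_r (\<lambda>z. (1 / snd z) *\<^sub>R F2 z) (xp, r)) \<longlongrightarrow> (1 / 2) *\<^sub>R d_r (d_r F2) (xp, 0)) (at 0)"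
      unfolding drrF2[OF x0]
      by (rule Lim_transform_eventually[OF L2]) (rule eventually_mono[OF ev], simp add: drG eD)
    show ?thesis using L1' L2' by blast
  qed
  have main_pos: "laplacian f (xp, r *\<^sub>R w) =
              laplacian F1 (xp, r) + mul (\<Sum>j\<in>UNIV. w $ j *\<^sub>R v (Inr j)) (laplacian F2 (xp, r))
              + (real CARD('q) - 1) *\<^sub>R ((1 / r) *\<^sub>R d_r F1 (xp, r)
                + mul (\<Sum>j\<in>UNIV. w $ j *\<^sub>R v (Inr j)) (d_r (\<lambda>z. (1 / snd z) *\<^sub>R F2 z) (xp, r)))"
    if xr: "(xp, r) \<in> D" and r0: "r > 0" and w1: "norm w = 1" for xp r w
  proof -
    define L where "L y = (\<Sum>j\<in>UNIV. y $ j *\<^sub>R v (Inr j))" for y :: "(real, 'q) vec"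
    have Ll: "linear L" unfolding L_def[abs_def]
      by (rule linearI) (simp_all add: scaleR_add_left sum.distrib scaleR_sum_right)
    obtain e0 where e0: "e0 > 0" "\<And>s. \<bar>s - r\<bar> < e0 \<Longrightarrow> (xp, s) \<in> D" using ball_D[OF xr] by blast
    define e where "e = min e0 r"
    have e: "e > 0" "e \<le> r" "\<And>s. \<bar>s - r\<bar> < e \<Longrightarrow> (xp, s) \<in> D"
      using e0 r0 by (auto simp: e_def)
    have Ppart: "pderiv_dir (i, 0) (pderiv_dir (i, 0) f) (xp, r *\<^sub>R w) =
        blinfun_apply (blinfun_apply (F1'' (xp, r)) (i, 0)) (i, 0)
        + mul (L w) (blinfun_apply (blinfun_apply (F2'' (xp, r)) (i, 0)) (i, 0))" for i
    proof (rule second_dir)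
      let ?T = "(\<lambda>t. (xp, r) + t *\<^sub>R (i, 0::real)) -` D"
      show oT: "open ?T" by (rule open_vimage[OF D_open]) (intro continuous_intros)
      show "0 \<in> ?T" using xr by simp
      show "((\<lambda>s. f ((xp, r *\<^sub>R w) + s *\<^sub>R (i, 0))) has_vector_derivative
          blinfun_apply (F1' ((xp, r) + t *\<^sub>R (i, 0))) (i, 0)
          + mul (L w) (blinfun_apply (F2' ((xp, r) + t *\<^sub>R (i, 0))) (i, 0))) (at t)"
        if tT: "t \<in> ?T" for t
      proof -
        have d: "((\<lambda>s. F1 ((xp, r) + s *\<^sub>R (i, 0)) + mul (L w) (F2 ((xp, r) + s *\<^sub>R (i, 0))))
          has_vector_derivative blinfun_apply (F1' ((xp, r) + t *\<^sub>R (i, 0))) (i, 0)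
          + mul (L w) (blinfun_apply (F2' ((xp, r) + t *\<^sub>R (i, 0))) (i, 0))) (at t)"
          using tT
          by (intro has_vector_derivative_add line_vd F1d1
              bounded_linear.has_vector_derivative[OF mb.bounded_linear_right] F2d1) auto
        show ?thesis
        proof (rule has_vector_derivative_transform_within_open[OF d oT tT])
          fix s assume "s \<in> ?T"
          then have "(xp + s *\<^sub>R i, r) \<in> D" by simp
          then show "F1 ((xp, r) + s *\<^sub>R (i, 0)) + mul (L w) (F2 ((xp, r) + s *\<^sub>R (i, 0)))
              = f ((xp, r *\<^sub>R w) + s *\<^sub>R (i, 0))"
            using f_def[of "xp + s *\<^sub>R i" r w] r0 w1 by (simp add: L_def)
        qed
      qed
      show "((\<lambda>t. blinfun_apply (F1' ((xp, r) + t *\<^sub>R (i, 0))) (i, 0)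
          + mul (L w) (blinfun_apply (F2' ((xp, r) + t *\<^sub>R (i, 0))) (i, 0))) has_vector_derivative
          blinfun_apply (blinfun_apply (F1'' (xp, r)) (i, 0)) (i, 0)
          + mul (L w) (blinfun_apply (blinfun_apply (F2'' (xp, r)) (i, 0)) (i, 0))) (at 0)"
        by (intro has_vector_derivative_add C2_line2 F1d2 F2d2 xr
              bounded_linear.has_vector_derivative[OF mb.bounded_linear_right])
    qed
    define k1 where "k1 = (1 / r) *\<^sub>R b1 xp r - (1 / r\<^sup>2) *\<^sub>R F2 (xp, r)"
    define k2 where "k2 = (1 / r) *\<^sub>R b2 xp r - (2 / r\<^sup>2) *\<^sub>R b1 xp r + (2 / r ^ 3) *\<^sub>R F2 (xp, r)"
    have Qpart: "pderiv_dir (0, b) (pderiv_dir (0, b) f) (xp, r *\<^sub>R w) =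
        ((1 - (w \<bullet> b)\<^sup>2) / r) *\<^sub>R a1 xp r + (w \<bullet> b)\<^sup>2 *\<^sub>R a2 xp r
             + 2 *\<^sub>R mul ((w \<bullet> b) *\<^sub>R L b) k1
             + mul (L w) ((1 - (w \<bullet> b)\<^sup>2) *\<^sub>R k1 + (w \<bullet> b)\<^sup>2 *\<^sub>R (r *\<^sub>R k2))"
      if bB: "b \<in> Basis" for b
    proof -
      have nb: "norm b = 1" using bB by simp
      obtain g1 where g1a: "\<And>t. \<bar>norm (r *\<^sub>R w + t *\<^sub>R b) - r\<bar> < e \<Longrightarrow>
            ((\<lambda>t. F1 (xp, norm (r *\<^sub>R w + t *\<^sub>R b)) + mul (L (r *\<^sub>R w + t *\<^sub>R b))
                   ((1 / norm (r *\<^sub>R w + t *\<^sub>R b)) *\<^sub>R F2 (xp, norm (r *\<^sub>R w + t *\<^sub>R b))))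
              has_vector_derivative g1 t) (at t)"
        and g1b: "(g1 has_vector_derivative
            (((1 - (w \<bullet> b)\<^sup>2) / r) *\<^sub>R a1 xp r + (w \<bullet> b)\<^sup>2 *\<^sub>R a2 xp r
             + 2 *\<^sub>R mul ((w \<bullet> b) *\<^sub>R L b) k1
             + mul (L w) ((1 - (w \<bullet> b)\<^sup>2) *\<^sub>R k1 + (w \<bullet> b)\<^sup>2 *\<^sub>R (r *\<^sub>R k2)))) (at 0)"
        using q_dir_1d[OF mbl Ll r0 e(1) e(2) w1 nb, of "\<lambda>s. F1 (xp, s)" "a1 xp" "a2 xp"
            "\<lambda>s. F2 (xp, s)" "b1 xp" "b2 xp"] dh1 da1 dh2 db1 e(3)
        unfolding k1_def k2_def by blast
      let ?T = "(\<lambda>t. norm (r *\<^sub>R w + t *\<^sub>R b)) -` ball r e"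
      have memT: "t \<in> ?T \<longleftrightarrow> \<bar>norm (r *\<^sub>R w + t *\<^sub>R b) - r\<bar> < e" for t
        by (simp add: dist_real_def abs_minus_commute)
      show ?thesis
      proof (rule second_dir)
        show oT: "open ?T" by (rule open_vimage) (auto intro!: continuous_intros)
        show "0 \<in> ?T" using w1 r0 e(1) by (simp add: memT)
        show "((\<lambda>s. f ((xp, r *\<^sub>R w) + s *\<^sub>R (0, b))) has_vector_derivative g1 t) (at t)"
          if tT: "t \<in> ?T" for t
        proof (rule has_vector_derivative_transform_within_open[OF g1a[OF tT[unfolded memT]] oT tT])
          fix s assume sT: "s \<in> ?T"
          define \<rho> where "\<rho> = norm (r *\<^sub>R w + s *\<^sub>R b)"
          have \<rho>e: "\<bar>\<rho> - r\<bar> < e" using sT memT \<rho>_def by blast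
          then have \<rho>pos: "\<rho> > 0" using e(2) by linarith
          define w' where "w' = (1 / \<rho>) *\<^sub>R (r *\<^sub>R w + s *\<^sub>R b)"
          have nw': "norm w' = 1" using \<rho>pos by (simp add: w'_def \<rho>_def)
          have rw': "\<rho> *\<^sub>R w' = r *\<^sub>R w + s *\<^sub>R b" using \<rho>pos by (simp add: w'_def)
          have Lw': "L w' = (1 / \<rho>) *\<^sub>R L (r *\<^sub>R w + s *\<^sub>R b)"
            using Ll by (simp add: w'_def linear_scale)
          have "f (xp, r *\<^sub>R w + s *\<^sub>R b) = F1 (xp, \<rho>) + mul (L w') (F2 (xp, \<rho>))"
            using f_def[OF e(3)[OF \<rho>e] less_imp_le[OF \<rho>pos] nw'] by (simp add: rw' L_def)
          also have "\<dots> = F1 (xp, \<rho>) + mul (L (r *\<^sub>R w + s *\<^sub>R b)) ((1 / \<rho>) *\<^sub>R F2 (xp, \<rho>))"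
            by (simp add: Lw' mb.scaleR_left mb.scaleR_right)
          finally show "F1 (xp, norm (r *\<^sub>R w + s *\<^sub>R b)) + mul (L (r *\<^sub>R w + s *\<^sub>R b))
                   ((1 / norm (r *\<^sub>R w + s *\<^sub>R b)) *\<^sub>R F2 (xp, norm (r *\<^sub>R w + s *\<^sub>R b)))
              = f ((xp, r *\<^sub>R w) + s *\<^sub>R (0, b))"
            by (simp add: \<rho>_def)
        qed
        show "(g1 has_vector_derivative
            (((1 - (w \<bullet> b)\<^sup>2) / r) *\<^sub>R a1 xp r + (w \<bullet> b)\<^sup>2 *\<^sub>R a2 xp r
             + 2 *\<^sub>R mul ((w \<bullet> b) *\<^sub>R L b) k1
             + mul (L w) ((1 - (w \<bullet> b)\<^sup>2) *\<^sub>R k1 + (w \<bullet> b)\<^sup>2 *\<^sub>R (r *\<^sub>R k2)))) (at 0)"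
          by (rule g1b)
      qed
    qed
    define c where "c b = w \<bullet> b" for b :: "(real, 'q) vec"
    define q where "q = real CARD('q)"
    have Sc2: "(\<Sum>b\<in>Basis. (c b)\<^sup>2) = 1"
    proof -
      have "(\<Sum>b\<in>Basis. (c b)\<^sup>2) = w \<bullet> w"
        by (simp add: c_def euclidean_inner[of w w] power2_eq_square)
      also have "\<dots> = 1" using w1 by (simp add: dot_square_norm)
      finally show ?thesis .
    qed
    have cardB: "card (Basis :: (real, 'q) vec set) = CARD('q)" by simp
    have S1c2: "(\<Sum>b\<in>Basis. (1 - (c b)\<^sup>2)) = q - 1"
      by (simp add: sum_subtractf Sc2 q_def)
    have S1c2r: "(\<Sum>b\<in>Basis. (1 - (c b)\<^sup>2) / r) = (q - 1) / r"
      by (simp add: sum_divide_distrib[symmetric] S1c2)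
    have ScL: "(\<Sum>b\<in>Basis. c b *\<^sub>R L b) = L w"
    proof -
      have "L w = L (\<Sum>b\<in>Basis. (w \<bullet> b) *\<^sub>R b)" by (simp add: euclidean_representation)
      also have "\<dots> = (\<Sum>b\<in>Basis. c b *\<^sub>R L b)"
        using Ll by (simp add: linear_sum linear_scale c_def)
      finally show ?thesis by simp
    qed
    have Qsum: "(\<Sum>b\<in>Basis. pderiv_dir (0, b) (pderiv_dir (0, b) f) (xp, r *\<^sub>R w)) =
        ((q - 1) / r) *\<^sub>R a1 xp r + a2 xp r + 2 *\<^sub>R mul (L w) k1
        + mul (L w) ((q - 1) *\<^sub>R k1 + r *\<^sub>R k2)"
    proof -
      have "(\<Sum>b\<in>Basis. pderiv_dir (0, b) (pderiv_dir (0, b) f) (xp, r *\<^sub>R w)) =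
        (\<Sum>b\<in>Basis. ((1 - (c b)\<^sup>2) / r) *\<^sub>R a1 xp r + (c b)\<^sup>2 *\<^sub>R a2 xp r
             + 2 *\<^sub>R mul (c b *\<^sub>R L b) k1
             + mul (L w) ((1 - (c b)\<^sup>2) *\<^sub>R k1 + (c b)\<^sup>2 *\<^sub>R (r *\<^sub>R k2)))"
        by (rule sum.cong) (simp_all add: Qpart c_def)
      also have "\<dots> = (\<Sum>b\<in>Basis. ((1 - (c b)\<^sup>2) / r)) *\<^sub>R a1 xp r + (\<Sum>b\<in>Basis. (c b)\<^sup>2) *\<^sub>R a2 xp r
             + 2 *\<^sub>R mul (\<Sum>b\<in>Basis. c b *\<^sub>R L b) k1
             + mul (L w) ((\<Sum>b\<in>Basis. (1 - (c b)\<^sup>2)) *\<^sub>R k1 + (\<Sum>b\<in>Basis. (c b)\<^sup>2) *\<^sub>R (r *\<^sub>R k2))"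
        by (simp add: sum.distrib scaleR_sum_left scaleR_sum_right mb.sum_left mb.sum_right mb.add_right
            del: scaleR_scaleR)
      also have "\<dots> = ((q - 1) / r) *\<^sub>R a1 xp r + a2 xp r + 2 *\<^sub>R mul (L w) k1
        + mul (L w) ((q - 1) *\<^sub>R k1 + r *\<^sub>R k2)"
        unfolding S1c2r Sc2 ScL S1c2 by simp
      finally show ?thesis .
    qed
    define A1 where "A1 = (\<Sum>i\<in>Basis. blinfun_apply (blinfun_apply (F1'' (xp, r)) (i, 0)) (i, 0))"
    define A2 where "A2 = (\<Sum>i\<in>Basis. blinfun_apply (blinfun_apply (F2'' (xp, r)) (i, 0)) (i, 0))"
    have lapf: "laplacian f (xp, r *\<^sub>R w) = A1 + mul (L w) A2 +
        (((q - 1) / r) *\<^sub>R a1 xp r + a2 xp r + 2 *\<^sub>R mul (L w) k1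
        + mul (L w) ((q - 1) *\<^sub>R k1 + r *\<^sub>R k2))"
      unfolding laplacian_def sum_Basis_prod_gen Qsum Ppart A1_def A2_def
      by (simp add: sum.distrib mb.sum_right)
    have lapF1: "laplacian F1 (xp, r) = A1 + a2 xp r"
      by (simp add: C2_lap[OF D_open xr F1d1 F1d2] sum_Basis_prod_gen A1_def a2_def e01_def)
    have lapF2: "laplacian F2 (xp, r) = A2 + b2 xp r"
      by (simp add: C2_lap[OF D_open xr F2d1 F2d2] sum_Basis_prod_gen A2_def b2_def e01_def)
    have rne: "r \<noteq> 0" using r0 by simp
    have b2k: "b2 xp r = 2 *\<^sub>R k1 + r *\<^sub>R k2"
      unfolding k1_def k2_def using rne
      by (simp add: scaleR_diff_right scaleR_add_right power2_eq_square power3_eq_cube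
          scaleR_add_left[symmetric] scaleR_diff_left[symmetric])
    have "laplacian f (xp, r *\<^sub>R w) =
              laplacian F1 (xp, r) + mul (L w) (laplacian F2 (xp, r))
              + (q - 1) *\<^sub>R ((1 / r) *\<^sub>R d_r F1 (xp, r) + mul (L w) (d_r (\<lambda>z. (1 / snd z) *\<^sub>R F2 z) (xp, r)))"
      unfolding lapf lapF1 lapF2 drF1[OF xr] drG[OF xr rne] k1_def[symmetric] b2k
      by (simp add: mb.add_right mb.diff_right mb.scaleR_right scaleR_add_right algebra_simps scaleR_2)
    then show ?thesis by (simp add: L_def q_def)
  qed
  show ?thesis
  proof (intro conjI)
    show "\<forall>xp. (xp, 0) \<in> D \<longrightarrow>
        ((\<lambda>r. (1 / r) *\<^sub>R d_r F1 (xp, r)) \<longlongrightarrow> d_r (d_r F1) (xp, 0)) (at 0) \<and>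
        ((\<lambda>r. d_r (\<lambda>z. (1 / snd z) *\<^sub>R F2 z) (xp, r)) \<longlongrightarrow> (1 / 2) *\<^sub>R d_r (d_r F2) (xp, 0)) (at 0)"
      using part1 by blast
    show "\<forall>xp r w. (xp, r) \<in> D \<longrightarrow> r \<ge> 0 \<longrightarrow> norm w = 1 \<longrightarrow>
        (let om = (\<Sum>j\<in>UNIV. w $ j *\<^sub>R v (Inr j));
             T1 = (if r = 0 then d_r (d_r F1) (xp, 0) else (1 / r) *\<^sub>R d_r F1 (xp, r));
             T2 = (if r = 0 then (1 / 2) *\<^sub>R d_r (d_r F2) (xp, 0)
                   else d_r (\<lambda>z. (1 / snd z) *\<^sub>R F2 z) (xp, r))
         in laplacian f (xp, r *\<^sub>R w) =
              laplacian F1 (xp, r) + mul om (laplacian F2 (xp, r))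
              + (real CARD('q) - 1) *\<^sub>R (T1 + mul om T2))"
    proof (intro allI impI)
      fix xp :: "(real, 'p1) vec" and r :: real and w :: "(real, 'q) vec" assume xr: "(xp, r) \<in> D" and r0: "r \<ge> 0" and w1: "norm w = (1::real)"
      define om where "om = (\<Sum>j\<in>UNIV. w $ j *\<^sub>R v (Inr j))"
      show "let om = (\<Sum>j\<in>UNIV. w $ j *\<^sub>R v (Inr j));
             T1 = (if r = 0 then d_r (d_r F1) (xp, 0) else (1 / r) *\<^sub>R d_r F1 (xp, r));
             T2 = (if r = 0 then (1 / 2) *\<^sub>R d_r (d_r F2) (xp, 0)
                   else d_r (\<lambda>z. (1 / snd z) *\<^sub>R F2 z) (xp, r))
         in laplacian f (xp, r *\<^sub>R w) =
              laplacian F1 (xp, r) + mul om (laplacian F2 (xp, r))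
              + (real CARD('q) - 1) *\<^sub>R (T1 + mul om T2)"
      proof (cases "r = 0")
        case False
        then have "r > 0" using r0 by simp
        then show ?thesis using main_pos[OF xr _ w1] False by (simp add: Let_def)
      next
        case True
        have x0: "(xp, 0) \<in> D" using xr True by simp
        obtain e where e: "e > 0" "\<And>s. \<bar>s - 0\<bar> < e \<Longrightarrow> (xp, s) \<in> D" using ball_D[OF x0] by blast
        have ev: "\<forall>\<^sub>F s in at_right (0::real). 0 < s \<and> s < e"
          using eventually_at_right_real[OF e(1)] by (rule eventually_mono) simp
        have x0U: "(xp, 0) \<in> U" using x0 by (simp add: U_def)
        have g1: "((\<lambda>s. (xp, s *\<^sub>R w)) \<longlongrightarrow> (xp, 0)) (at_right (0::real))"
        proof -
          have "((\<lambda>s. (xp, s *\<^sub>R w)) \<longlongrightarrow> (xp, 0 *\<^sub>R w)) (at_right (0::real))"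
            by (intro tendsto_intros)
          then show ?thesis by simp
        qed
        have g2: "((\<lambda>s. (xp, s)) \<longlongrightarrow> (xp, 0)) (at_right (0::real))"
          by (intro tendsto_intros)
        have limL: "((\<lambda>s. laplacian f (xp, s *\<^sub>R w)) \<longlongrightarrow> laplacian f (xp, 0)) (at_right 0)"
          by (rule lap_tendsto[OF U_open x0U fd1 fd2 fc g1])
        have limF1: "((\<lambda>s. laplacian F1 (xp, s)) \<longlongrightarrow> laplacian F1 (xp, 0)) (at_right 0)"
          by (rule lap_tendsto[OF D_open x0 F1d1 F1d2 F1c g2])
        have limF2: "((\<lambda>s. laplacian F2 (xp, s)) \<longlongrightarrow> laplacian F2 (xp, 0)) (at_right 0)"
          by (rule lap_tendsto[OF D_open x0 F2d1 F2d2 F2c g2])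
        have p1a: "((\<lambda>r. (1 / r) *\<^sub>R d_r F1 (xp, r)) \<longlongrightarrow> d_r (d_r F1) (xp, 0)) (at_right 0)"
          using part1[OF x0] filterlim_at_split by blast
        have p1b: "((\<lambda>r. d_r (\<lambda>z. (1 / snd z) *\<^sub>R F2 z) (xp, r)) \<longlongrightarrow> (1 / 2) *\<^sub>R d_r (d_r F2) (xp, 0)) (at_right 0)"
          using part1[OF x0] filterlim_at_split by blast
        have limR: "((\<lambda>s. laplacian F1 (xp, s) + mul om (laplacian F2 (xp, s))
              + (real CARD('q) - 1) *\<^sub>R ((1 / s) *\<^sub>R d_r F1 (xp, s)
                + mul om (d_r (\<lambda>z. (1 / snd z) *\<^sub>R F2 z) (xp, s))))
            \<longlongrightarrow> laplacian F1 (xp, 0) + mul om (laplacian F2 (xp, 0))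
              + (real CARD('q) - 1) *\<^sub>R (d_r (d_r F1) (xp, 0) + mul om ((1 / 2) *\<^sub>R d_r (d_r F2) (xp, 0))))
            (at_right 0)"
          by (intro tendsto_add tendsto_scaleR tendsto_const mb.tendsto limF1 limF2 p1a p1b)
        have limL': "((\<lambda>s. laplacian F1 (xp, s) + mul om (laplacian F2 (xp, s))
              + (real CARD('q) - 1) *\<^sub>R ((1 / s) *\<^sub>R d_r F1 (xp, s)
                + mul om (d_r (\<lambda>z. (1 / snd z) *\<^sub>R F2 z) (xp, s))))
            \<longlongrightarrow> laplacian f (xp, 0)) (at_right 0)"
        proof (rule Lim_transform_eventually[OF limL])
          show "\<forall>\<^sub>F s in at_right 0. laplacian f (xp, s *\<^sub>R w) = laplacian F1 (xp, s) + mul om (laplacian F2 (xp, s))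
              + (real CARD('q) - 1) *\<^sub>R ((1 / s) *\<^sub>R d_r F1 (xp, s)
                + mul om (d_r (\<lambda>z. (1 / snd z) *\<^sub>R F2 z) (xp, s)))"
          proof (rule eventually_mono[OF ev])
            fix s :: real assume s: "0 < s \<and> s < e"
            then have "(xp, s) \<in> D" using e(2)[of s] by simp
            then show "laplacian f (xp, s *\<^sub>R w) = laplacian F1 (xp, s) + mul om (laplacian F2 (xp, s))
              + (real CARD('q) - 1) *\<^sub>R ((1 / s) *\<^sub>R d_r F1 (xp, s)
                + mul om (d_r (\<lambda>z. (1 / snd z) *\<^sub>R F2 z) (xp, s)))"
              using main_pos[OF _ _ w1] s by (simp add: om_def)
          qed
        qed
        have eq: "laplacian f (xp, 0) = laplacian F1 (xp, 0) + mul om (laplacian F2 (xp, 0))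
              + (real CARD('q) - 1) *\<^sub>R (d_r (d_r F1) (xp, 0) + mul om ((1 / 2) *\<^sub>R d_r (d_r F2) (xp, 0)))"
          by (rule tendsto_unique[OF trivial_limit_at_right_real limL' limR])
        show ?thesis using eq True by (simp add: Let_def om_def)
      qed
    qed
  qed
qed

end
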